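(* Let $\beta\in[0,1)$ and let $U:\mathbb{R}^d\to\mathbb{R}$ be twice continuously differentiable with $\nabla U(0)=0$ and $\sup_x\|\mathrm{D}^2U(x)\|\le\mathtt{L}$. Assume there exist $\mathtt{m}_\beta>0$, $\mathtt{L}_\beta,\mathtt{K}_\beta\ge0$ with $\frac{\mathtt{L}_\beta}{1+\|x\|^{3\beta/4}}\ge\mathrm{D}^2U(x)[y,y]\ge\frac{\mathtt{m}_\beta}{1+\|x\|^\beta}$ for all $\|x\|\ge\mathtt{K}_\beta$, $\|y\|=1$. Let $\bar\gamma\le(4\mathtt{L})^{-1}\wedge(\mathtt{m}_\beta^3/(2^4\mathtt{L}_\beta^4))$, $\epsilon=(\mathtt{m}_\beta^3/2^4)\{2^{3/2}\mathtt{L}_\beta^2+2^{-1/2}\bar\gamma^{1/2}\mathtt{L}_\beta^3\}^{-1}$ and $$C_{2,\bar\gamma,\beta}=2\mathtt{L}+2^{3/2}\mathtt{L}_\beta^2\epsilon^{-1}+(\bar\gamma/2)\mathtt{L}^2+2^{-1/2}\bar\gamma^{3/2}\mathtt{L}_\beta^3\epsilon^{-1}.$$ Let $\tilde{\mathtt{K}}_\beta=[4\mathtt{K}_\beta(1+\mathtt{L}/\mathtt{m}_\beta)]\vee[4\mathtt{K}_\beta(1+\mathtt{L}/\mathtt{m}_\beta)]^{1/(1-\beta)}$ and $\bar{\mathtt{K}}_\beta=[2\mathtt{L}\mathtt{K}_\beta/\mathtt{L}_\beta]\vee[2\mathtt{L}\mathtt{K}_\beta/\mathtt{L}_\beta]^{1/(1-3\beta/4)}$.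 Then for all $\gamma\in(0,\bar\gamma]$ and $x,z\in\mathbb{R}^d$ with $\|x\|\ge\max(2\mathtt{K}_\beta,\tilde{\mathtt{K}}_\beta,\bar{\mathtt{K}}_\beta)$ and $\|z\|\le\|x\|/(4\sqrt{2\gamma})$, $$\tau_\gamma(x,z)\le C_{2,\bar\gamma,\beta}\gamma\|z\|^2.$$
   Context: For $\gamma>0$ and $x,z\in\mathbb{R}^d$, $\tau_\gamma(x,z)=U(x-\gamma\nabla U(x)+\sqrt{2\gamma}z)-U(x)+\frac12\big\{\|z-(\gamma/2)^{1/2}[\nabla U(x)+\nabla U(x-\gamma\nabla U(x)+\sqrt{2\gamma}z)]\|^2-\|z\|^2\big\}$. *)

theory Defs
  imports "HOL-Analysis.Analysis"
begin

text \<open>Real power t^a for t \<ge> 0 with the usual convention 0^0 = 1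
  (Isabelle's powr has 0 powr a = 0 for all a).\<close>
definition rpow :: "real \<Rightarrow> real \<Rightarrow> real" where
  "rpow t a = (if t = 0 then (if a = 0 then 1 else 0) else t powr a)"

definition tau :: "('a::euclidean_space \<Rightarrow> real) \<Rightarrow> ('a \<Rightarrow> 'a) \<Rightarrow> real \<Rightarrow> 'a \<Rightarrow> 'a \<Rightarrow> real" where
  "tau U G \<gamma> x z =
     (let y = x - \<gamma> *\<^sub>R G x + sqrt (2 * \<gamma>) *\<^sub>R z in
      U y - U x + (1/2) * ((norm (z - sqrt (\<gamma> / 2) *\<^sub>R (G x + G y)))\<^sup>2 - (norm z)\<^sup>2))"

definition eps_const :: "real \<Rightarrow> real \<Rightarrow> real \<Rightarrow> real" where
  "eps_const m\<^sub>\<beta> L\<^sub>\<beta> \<gamma>bar =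
     (m\<^sub>\<beta> ^ 3 / 2 ^ 4) / (2 powr (3/2) * L\<^sub>\<beta>\<^sup>2 + 2 powr (-1/2) * sqrt \<gamma>bar * L\<^sub>\<beta> ^ 3)"

definition C2_const :: "real \<Rightarrow> real \<Rightarrow> real \<Rightarrow> real \<Rightarrow> real" where
  "C2_const L m\<^sub>\<beta> L\<^sub>\<beta> \<gamma>bar =
     (let \<epsilon> = eps_const m\<^sub>\<beta> L\<^sub>\<beta> \<gamma>bar in
      2 * L + 2 powr (3/2) * L\<^sub>\<beta>\<^sup>2 / \<epsilon> + (\<gamma>bar / 2) * L\<^sup>2
        + 2 powr (-1/2) * \<gamma>bar powr (3/2) * L\<^sub>\<beta> ^ 3 / \<epsilon>)"

end

theory Submission
  imports Defs
begin

lemma line_deriv_real: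
  fixes F :: "'a::euclidean_space \<Rightarrow> real"
  assumes "\<And>p. (F has_derivative (\<lambda>h. inner (Fd p) h)) (at p)"
  shows "((\<lambda>t. F (x + t *\<^sub>R d)) has_real_derivative inner (Fd (x + t *\<^sub>R d)) d) (at t)"
proof -
  have l: "((\<lambda>t. x + t *\<^sub>R d) has_derivative (\<lambda>h. h *\<^sub>R d)) (at t)"
    by (auto intro!: derivative_eq_intros)
  have "((\<lambda>t. F (x + t *\<^sub>R d)) has_derivative (\<lambda>h. inner (Fd (x + t *\<^sub>R d)) (h *\<^sub>R d))) (at t)"
    using has_derivative_compose[OF l assms] by (simp add: o_def)
  then show ?thesis unfolding has_field_derivative_def
    by (rule has_derivative_eq_rhs) (auto simp: fun_eq_iff)
qed

lemma line_deriv_vec: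
  fixes G :: "'a::euclidean_space \<Rightarrow> 'a"
  assumes "\<And>p. (G has_derivative blinfun_apply (H p)) (at p)"
  shows "((\<lambda>t. inner (G (x + t *\<^sub>R d)) w) has_real_derivative inner (H (x + t *\<^sub>R d) d) w) (at t)"
proof -
  have l: "((\<lambda>t. x + t *\<^sub>R d) has_derivative (\<lambda>h. h *\<^sub>R d)) (at t)"
    by (auto intro!: derivative_eq_intros)
  have "((\<lambda>t. G (x + t *\<^sub>R d)) has_derivative (\<lambda>h. H (x + t *\<^sub>R d) (h *\<^sub>R d))) (at t)"
    using has_derivative_compose[OF l assms] by (simp add: o_def)
  then have "((\<lambda>t. inner (G (x + t *\<^sub>R d)) w) has_derivative (\<lambda>h. inner (H (x + t *\<^sub>R d) (h *\<^sub>R d)) w)) (at t)"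
    by (auto intro!: derivative_eq_intros)
  then show ?thesis unfolding has_field_derivative_def
    by (rule has_derivative_eq_rhs) (auto simp: fun_eq_iff blinfun.scaleR_right)
qed

lemma second_diff_repr:
  fixes U :: "'a::euclidean_space \<Rightarrow> real"
  assumes grad: "\<And>x. (U has_derivative (\<lambda>h. G x \<bullet> h)) (at x)"
    and hess: "\<And>x. (G has_derivative blinfun_apply (H x)) (at x)"
    and h: "h > 0"
  shows "\<exists>p. norm (p - x) \<le> h * (norm u + norm v) \<and>
     U (x + h *\<^sub>R u + h *\<^sub>R v) - U (x + h *\<^sub>R u) - U (x + h *\<^sub>R v) + U x = h\<^sup>2 * inner (H p v) u"
proof -
  define k where "k s = U ((x + h *\<^sub>R v) + s *\<^sub>R u) - U (x + s *\<^sub>R u)" for s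
  have dk: "(k has_real_derivative (inner (G ((x + h *\<^sub>R v) + s *\<^sub>R u)) u - inner (G (x + s *\<^sub>R u)) u)) (at s)" for s
    unfolding k_def by (intro DERIV_diff line_deriv_real[OF grad])
  obtain \<xi> where xi: "0 < \<xi>" "\<xi> < h" "k h - k 0 = (h - 0) * (inner (G ((x + h *\<^sub>R v) + \<xi> *\<^sub>R u)) u - inner (G (x + \<xi> *\<^sub>R u)) u)"
    using MVT2[OF h, of k, OF dk] by blast
  define j where "j t = inner (G ((x + \<xi> *\<^sub>R u) + t *\<^sub>R v)) u" for t
  have dj: "(j has_real_derivative inner (H ((x + \<xi> *\<^sub>R u) + t *\<^sub>R v) v) u) (at t)" for t
    unfolding j_def by (rule line_deriv_vec[OF hess])
  obtain \<eta> where eta: "0 < \<eta>" "\<eta> < h" "j h - j 0 = (h - 0) * inner (H ((x + \<xi> *\<^sub>R u) + \<eta> *\<^sub>R v) v) u"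
    using MVT2[OF h, of j, OF dj] by blast
  define p where "p = (x + \<xi> *\<^sub>R u) + \<eta> *\<^sub>R v"
  have "norm (p - x) \<le> norm (\<xi> *\<^sub>R u) + norm (\<eta> *\<^sub>R v)"
    unfolding p_def using norm_triangle_ineq[of "\<xi> *\<^sub>R u" "\<eta> *\<^sub>R v"] by (simp add: algebra_simps)
  also have "\<dots> \<le> h * norm u + h * norm v"
    using xi eta by (intro add_mono) (auto intro: mult_right_mono)
  finally have n: "norm (p - x) \<le> h * (norm u + norm v)" by (simp add: algebra_simps)
  have jh: "j h - j 0 = inner (G ((x + h *\<^sub>R v) + \<xi> *\<^sub>R u)) u - inner (G (x + \<xi> *\<^sub>R u)) u"
    unfolding j_def by (simp add: algebra_simps)
  then have "U (x + h *\<^sub>R u + h *\<^sub>R v) - U (x + h *\<^sub>R u) - U (x + h *\<^sub>R v) + U x = h\<^sup>2 * inner (H p v) u"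
  proof -
    define Q where "Q = inner (H p v) u"
    define g1 where "g1 = inner (G ((x + h *\<^sub>R v) + \<xi> *\<^sub>R u)) u"
    define g0 where "g0 = inner (G (x + \<xi> *\<^sub>R u)) u"
    have e1: "g1 - g0 = h * Q" using eta(3) jh unfolding Q_def g1_def g0_def p_def by simp
    have e2: "U (x + h *\<^sub>R u + h *\<^sub>R v) - U (x + h *\<^sub>R u) - U (x + h *\<^sub>R v) + U x = h * (g1 - g0)"
      using xi(3) unfolding k_def g1_def g0_def by (simp add: algebra_simps)
    show ?thesis using e1 e2 unfolding Q_def power2_eq_square by simp
  qed
  with n show ?thesis by blast
qed

lemma blinfun_inner_bound:
  fixes A :: "'a::real_inner \<Rightarrow>\<^sub>L 'a"
  shows "\<bar>inner (A v) u\<bar> \<le> norm A * norm v * norm u"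
proof -
  have "\<bar>inner (A v) u\<bar> \<le> norm (A v) * norm u" by (rule Cauchy_Schwarz_ineq2)
  also have "\<dots> \<le> norm A * norm v * norm u" by (intro mult_right_mono norm_blinfun) auto
  finally show ?thesis .
qed

lemma hess_sym:
  fixes U :: "'a::euclidean_space \<Rightarrow> real"
  assumes grad: "\<And>x. (U has_derivative (\<lambda>h. G x \<bullet> h)) (at x)"
    and hess: "\<And>x. (G has_derivative blinfun_apply (H x)) (at x)"
    and hc: "continuous_on UNIV H"
  shows "inner (H x v) u = inner (H x u) v"
proof (rule ccontr)
  define c where "c = inner (H x v) u - inner (H x u) v"
  assume "inner (H x v) u \<noteq> inner (H x u) v"
  then have c0: "\<bar>c\<bar> > 0" unfolding c_def by simp
  define M where "M = norm u * norm v + 1"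
  have M0: "M > 0" unfolding M_def by (simp add: add_nonneg_pos)
  define e where "e = \<bar>c\<bar> / (2 * M)"
  have e0: "e > 0" unfolding e_def using c0 M0 by simp
  obtain d where d: "d > 0" "\<And>p. dist p x < d \<Longrightarrow> dist (H p) (H x) < e"
    using hc e0 unfolding continuous_on_iff by blast
  define h where "h = d / (2 * (norm u + norm v + 1))"
  have h0: "h > 0" unfolding h_def using d(1) by (simp add: add_nonneg_pos)
  have hd: "h * (norm u + norm v) < d"
  proof -
    have "h * (norm u + norm v) < h * (2 * (norm u + norm v + 1))"
      using h0 by (intro mult_strict_left_mono) (auto simp: add_nonneg_pos)
    also have "\<dots> = d"
    proof -
      have "2 * (norm u + norm v + 1) > 0" by (simp add: add_nonneg_pos)
      then show ?thesis by (simp add: h_def)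
    qed
    finally show ?thesis .
  qed
  obtain p where p: "norm (p - x) \<le> h * (norm u + norm v)"
    "U (x + h *\<^sub>R u + h *\<^sub>R v) - U (x + h *\<^sub>R u) - U (x + h *\<^sub>R v) + U x = h\<^sup>2 * inner (H p v) u"
    using second_diff_repr[OF grad hess h0] by blast
  obtain q where q: "norm (q - x) \<le> h * (norm v + norm u)"
    "U (x + h *\<^sub>R v + h *\<^sub>R u) - U (x + h *\<^sub>R v) - U (x + h *\<^sub>R u) + U x = h\<^sup>2 * inner (H q u) v"
    using second_diff_repr[OF grad hess h0] by blast
  have "h\<^sup>2 * inner (H p v) u = h\<^sup>2 * inner (H q u) v"
    using p(2) q(2) by (simp add: algebra_simps)
  then have pq: "inner (H p v) u = inner (H q u) v" using h0 by simp
  have dp: "dist (H p) (H x) < e" using d(2)[of p] p(1) hd by (simp add: dist_norm)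
  have dq: "dist (H q) (H x) < e" using d(2)[of q] q(1) hd by (simp add: dist_norm add.commute)
  have b1: "\<bar>inner (H p v) u - inner (H x v) u\<bar> \<le> e * (norm u * norm v)"
  proof -
    have "inner (H p v) u - inner (H x v) u = inner ((H p - H x) v) u"
      by (simp add: blinfun.diff_left inner_diff_left)
    then have "\<bar>inner (H p v) u - inner (H x v) u\<bar> \<le> norm (H p - H x) * norm v * norm u"
      using blinfun_inner_bound by metis
    also have "\<dots> \<le> e * (norm u * norm v)"
    proof -
      have "norm (H p - H x) \<le> e" using dp by (simp add: dist_norm)
      then have "norm (H p - H x) * (norm u * norm v) \<le> e * (norm u * norm v)"
        by (intro mult_right_mono) auto
      then show ?thesis by (simp add: algebra_simps)
    qed
    finally show ?thesis .
  qed
  have b2: "\<bar>inner (H q u) v - inner (H x u) v\<bar> \<le> e * (norm u * norm v)"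
  proof -
    have "inner (H q u) v - inner (H x u) v = inner ((H q - H x) u) v"
      by (simp add: blinfun.diff_left inner_diff_left)
    then have "\<bar>inner (H q u) v - inner (H x u) v\<bar> \<le> norm (H q - H x) * norm u * norm v"
      using blinfun_inner_bound by metis
    also have "\<dots> \<le> e * (norm u * norm v)"
    proof -
      have "norm (H q - H x) \<le> e" using dq by (simp add: dist_norm)
      then have "norm (H q - H x) * (norm u * norm v) \<le> e * (norm u * norm v)"
        by (intro mult_right_mono) auto
      then show ?thesis by (simp add: algebra_simps)
    qed
    finally show ?thesis .
  qed
  have "\<bar>c\<bar> \<le> 2 * e * (norm u * norm v)"
    using b1 b2 pq unfolding c_def by linarith
  also have "\<dots> < 2 * e * M" using e0 unfolding M_def by simp
  also have "\<dots> = \<bar>c\<bar>" unfolding e_def using M0 by simp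
  finally show False by simp
qed



lemma psd_bound:
  fixes A :: "'a::real_inner \<Rightarrow>\<^sub>L 'a"
  assumes sym: "\<And>u v. inner (A v) u = inner (A u) v"
    and lo: "\<And>v. inner (A v) v \<ge> 0"
    and up: "\<And>v. inner (A v) v \<le> b * (norm v)\<^sup>2"
  shows "\<bar>inner (A v) w\<bar> \<le> b * norm v * norm w"
proof (cases "v = 0 \<or> w = 0")
  case True
  then show ?thesis by (auto simp: blinfun.zero_right)
next
  case False
  then have nv: "norm v > 0" and nw: "norm w > 0" by auto
  have b0: "b \<ge> 0"
  proof -
    have "0 \<le> b * (norm v)\<^sup>2" using lo[of v] up[of v] by linarith
    then show ?thesis using nv by (simp add: zero_le_mult_iff)
  qed
  define v' where "v' = (1 / norm v) *\<^sub>R v"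
  define w' where "w' = (1 / norm w) *\<^sub>R w"
  have nv': "norm v' = 1" and nw': "norm w' = 1" using nv nw unfolding v'_def w'_def by auto
  have expp: "inner (A (v' + w')) (v' + w') = inner (A v') v' + 2 * inner (A v') w' + inner (A w') w'"
    using sym[of v' w'] by (simp add: blinfun.add_right inner_add_left inner_add_right)
  have expm: "inner (A (v' - w')) (v' - w') = inner (A v') v' - 2 * inner (A v') w' + inner (A w') w'"
    using sym[of v' w'] by (simp add: blinfun.diff_right inner_diff_left inner_diff_right)
  have n2: "(norm (v' + w'))\<^sup>2 \<le> 4" "(norm (v' - w'))\<^sup>2 \<le> 4"
  proof -
    have "norm (v' + w') \<le> 2" using norm_triangle_ineq[of v' w'] nv' nw' by simp
    then show "(norm (v' + w'))\<^sup>2 \<le> 4"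
      using power_mono[of "norm (v' + w')" 2 2] by simp
    have "norm (v' - w') \<le> 2" using norm_triangle_ineq4[of v' w'] nv' nw' by simp
    then show "(norm (v' - w'))\<^sup>2 \<le> 4"
      using power_mono[of "norm (v' - w')" 2 2] by simp
  qed
  have "4 * inner (A v') w' \<le> b * (norm (v' + w'))\<^sup>2"
    using expp expm up[of "v' + w'"] lo[of "v' - w'"] by linarith
  also have "\<dots> \<le> b * 4" using n2 b0 by (intro mult_left_mono) auto
  finally have u1: "inner (A v') w' \<le> b" by linarith
  have "- 4 * inner (A v') w' \<le> b * (norm (v' - w'))\<^sup>2"
    using expp expm up[of "v' - w'"] lo[of "v' + w'"] by linarith
  also have "\<dots> \<le> b * 4" using n2 b0 by (intro mult_left_mono) auto
  finally have u2: "- inner (A v') w' \<le> b" by linarith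
  have "inner (A v) w = norm v * norm w * inner (A v') w'"
    using nv nw unfolding v'_def w'_def by (simp add: blinfun.scaleR_right)
  moreover have "\<bar>inner (A v') w'\<bar> \<le> b" using u1 u2 by linarith
  ultimately have "\<bar>inner (A v) w\<bar> \<le> norm v * norm w * b"
  proof -
    assume e: "inner (A v) w = norm v * norm w * inner (A v') w'" and bb: "\<bar>inner (A v') w'\<bar> \<le> b"
    have "\<bar>inner (A v) w\<bar> = norm v * norm w * \<bar>inner (A v') w'\<bar>" unfolding e by (simp add: abs_mult)
    also have "\<dots> \<le> norm v * norm w * b" using bb by (intro mult_left_mono) auto
    finally show ?thesis .
  qed
  then show ?thesis by (simp add: algebra_simps)
qed



lemma rpow_nonneg: "0 \<le> rpow t e"
  unfolding rpow_def by auto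

lemma rpow_mono:
  assumes "0 \<le> s" "s \<le> t" "0 \<le> e"
  shows "rpow s e \<le> rpow t e"
proof (cases "s = 0")
  case True
  then show ?thesis using assms by (cases "e = 0") (auto simp: rpow_def)
next
  case False
  then show ?thesis using assms unfolding rpow_def by (auto intro: powr_mono2)
qed

lemma rpow_pieces:
  fixes \<rho> \<beta> :: real
  assumes "0 \<le> \<rho>" "0 \<le> \<beta>" "\<beta> \<le> 1"
  shows "rpow \<rho> \<beta> = (rpow \<rho> (\<beta>/4))^4" "rpow \<rho> (3*\<beta>/4) = (rpow \<rho> (\<beta>/4))^3"
    "rpow (3*\<rho>) \<beta> \<le> 3 * rpow \<rho> \<beta>"
proof -
  show "rpow \<rho> \<beta> = (rpow \<rho> (\<beta>/4))^4"
  proof (cases "\<rho> = 0")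
    case True then show ?thesis by (simp add: rpow_def)
  next
    case False
    then have "\<rho> > 0" using assms by simp
    then have "(\<rho> powr (\<beta>/4))^4 = \<rho> powr (real 4 * (\<beta>/4))"
      by (simp add: powr_realpow[symmetric] powr_powr mult.commute)
    then show ?thesis using False by (simp add: rpow_def)
  qed
  show "rpow \<rho> (3*\<beta>/4) = (rpow \<rho> (\<beta>/4))^3"
  proof (cases "\<rho> = 0")
    case True then show ?thesis by (simp add: rpow_def)
  next
    case False
    then have "\<rho> > 0" using assms by simp
    then have "(\<rho> powr (\<beta>/4))^3 = \<rho> powr (real 3 * (\<beta>/4))"
      by (simp add: powr_realpow[symmetric] powr_powr mult.commute)
    then show ?thesis using False by (simp add: rpow_def)
  qed
  show "rpow (3*\<rho>) \<beta> \<le> 3 * rpow \<rho> \<beta>"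
  proof (cases "\<rho> = 0")
    case True then show ?thesis by (simp add: rpow_def)
  next
    case False
    then have r: "\<rho> > 0" using assms by simp
    have "(3*\<rho>) powr \<beta> = 3 powr \<beta> * \<rho> powr \<beta>" using r by (simp add: powr_mult)
    also have "\<dots> \<le> 3 * \<rho> powr \<beta>"
    proof -
      have "3 powr \<beta> \<le> 3 powr (1::real)" using assms by (intro powr_mono) auto
      then show ?thesis by (intro mult_right_mono) auto
    qed
    finally show ?thesis using r by (simp add: rpow_def)
  qed
qed



lemma quad_max:
  fixes \<alpha> c d :: real
  assumes "\<alpha> > 0"
  shows "- \<alpha> * d\<^sup>2 + c * d \<le> c\<^sup>2 / (4 * \<alpha>)"
proof -
  have "0 \<le> (2 * \<alpha> * d - c)\<^sup>2" by simp
  then have "4 * \<alpha> * (- \<alpha> * d\<^sup>2 + c * d) \<le> c\<^sup>2" by (simp add: power2_eq_square algebra_simps)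
  then show ?thesis using assms by (simp add: field_simps mult.commute)
qed



lemma key_poly:
  fixes m Lb P :: real
  assumes m: "m > 0" and Lb: "Lb > 0" and P: "P \<ge> 0"
    and rel: "m * (1 + P^3) \<le> Lb * (1 + P^4)"
  shows "m\<^sup>2 * (1 + 3 * P^4) \<le> 8 * Lb\<^sup>2 * (1 + P^3)\<^sup>2"
proof (cases "P \<le> 1")
  case True
  have "P^4 \<le> P^3" using True P by (simp add: power_decreasing_iff power_decreasing)
  then have "Lb * (1 + P^4) \<le> Lb * (1 + P^3)" using Lb by (intro mult_left_mono) auto
  then have "m * (1 + P^3) \<le> Lb * (1 + P^3)" using rel by linarith
  then have mL: "m \<le> Lb" using P by (simp add: add_pos_nonneg)
  have p4: "P^4 \<le> 1" using True P by (simp add: power_le_one)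
  have "m\<^sup>2 * (1 + 3 * P^4) \<le> m\<^sup>2 * 4" using p4 by (intro mult_left_mono) auto
  also have "\<dots> \<le> Lb\<^sup>2 * 4" using mL m by (intro mult_right_mono power_mono) auto
  also have "\<dots> \<le> 8 * Lb\<^sup>2 * (1 + P^3)\<^sup>2"
  proof -
    have "1 \<le> (1 + P^3)\<^sup>2" using P by (simp add: one_le_power)
    then have "8 * Lb\<^sup>2 * 1 \<le> 8 * Lb\<^sup>2 * (1 + P^3)\<^sup>2" by (intro mult_left_mono) auto
    moreover have "Lb\<^sup>2 * 4 \<le> 8 * Lb\<^sup>2" by simp
    ultimately show ?thesis by linarith
  qed
  finally show ?thesis .
next
  case False
  then have P1: "P \<ge> 1" by simp
  have "1 + P^4 \<le> P * (1 + P^3)" using P1 by (simp add: algebra_simps power_Suc[symmetric] del: power_Suc)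
  then have "Lb * (1 + P^4) \<le> Lb * (P * (1 + P^3))" using Lb by (intro mult_left_mono) auto
  then have "m * (1 + P^3) \<le> (Lb * P) * (1 + P^3)" using rel by (simp add: mult.assoc)
  then have mL: "m \<le> Lb * P" using P by (simp add: add_pos_nonneg)
  have "m\<^sup>2 * (1 + 3 * P^4) \<le> (Lb * P)\<^sup>2 * (4 * P^4)"
  proof (intro mult_mono)
    show "m\<^sup>2 \<le> (Lb * P)\<^sup>2" using mL m by (intro power_mono) auto
    show "1 + 3 * P^4 \<le> 4 * P^4" using P1 by (simp add: one_le_power)
  qed auto
  also have "\<dots> = 4 * Lb\<^sup>2 * (P^3)\<^sup>2" by (simp add: power2_eq_square algebra_simps flip: power_Suc power_add)
  also have "\<dots> \<le> 8 * Lb\<^sup>2 * (1 + P^3)\<^sup>2"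
  proof -
    have "(P^3)\<^sup>2 \<le> (1 + P^3)\<^sup>2" using P by (intro power_mono) auto
    then have "4 * Lb\<^sup>2 * (P^3)\<^sup>2 \<le> 4 * Lb\<^sup>2 * (1 + P^3)\<^sup>2" by (intro mult_left_mono) auto
    moreover have "4 * Lb\<^sup>2 * (1 + P^3)\<^sup>2 \<le> 8 * Lb\<^sup>2 * (1 + P^3)\<^sup>2" by simp
    ultimately show ?thesis by linarith
  qed
  finally show ?thesis .
qed



lemma frac_cross:
  fixes a b c d :: real
  assumes "0 < b" "0 < d" "a * d \<le> c * b"
  shows "a / b \<le> c / d"
proof -
  have "a / b = (a * d) / (b * d)" using assms by simp
  also have "\<dots> \<le> (c * b) / (b * d)" using assms by (intro divide_right_mono) auto
  also have "\<dots> = c / d" using assms by simp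
  finally show ?thesis .
qed

lemma final_alg:
  fixes m Lb P R R1 R3 \<gamma> :: real
  assumes m: "m > 0" and Lb: "Lb > 0" and P: "P \<ge> 0"
    and R1: "R1 = P^4" and R3: "R3 = P^3" and R0: "0 \<le> R" and RR: "R \<le> 3 * R1"
    and rel: "m * (1 + R3) \<le> Lb * (1 + R1)"
    and g: "0 < \<gamma>" "\<gamma> \<le> m^3 / (16 * Lb^4)"
  shows "2 * \<gamma> * (Lb / (1 + R3))\<^sup>2 \<le> m / (1 + R)"
    and "(Lb / (1 + R3))\<^sup>2 / (3 * (m / (1 + R))) \<le> 128 * Lb^4 / m^3"
proof -
  have kp: "m\<^sup>2 * (1 + 3 * P^4) \<le> 8 * Lb\<^sup>2 * (1 + P^3)\<^sup>2"
    using key_poly[OF m Lb P] rel R1 R3 by simp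
  have kR: "m\<^sup>2 * (1 + R) \<le> 8 * Lb\<^sup>2 * (1 + R3)\<^sup>2"
  proof -
    have "m\<^sup>2 * (1 + R) \<le> m\<^sup>2 * (1 + 3 * P^4)" using RR R1 by (intro mult_left_mono) auto
    then show ?thesis using kp R3 by simp
  qed
  have R3p: "1 + R3 > 0" using R3 P by (simp add: add_pos_nonneg)
  have Rp: "1 + R > 0" using R0 by simp
  have "2 * \<gamma> * Lb\<^sup>2 * (1 + R) \<le> 2 * (m^3 / (16 * Lb^4)) * Lb\<^sup>2 * (1 + R)"
    using g Rp by (intro mult_right_mono) auto
  also have "\<dots> = m * (m\<^sup>2 * (1 + R)) / (8 * Lb\<^sup>2)" using Lb
    by (simp add: field_simps power2_eq_square power3_eq_cube power4_eq_xxxx)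
  also have "\<dots> \<le> m * (8 * Lb\<^sup>2 * (1 + R3)\<^sup>2) / (8 * Lb\<^sup>2)"
    using kR m Lb by (intro divide_right_mono mult_left_mono) auto
  also have "\<dots> = m * (1 + R3)\<^sup>2" using Lb by simp
  finally have A: "2 * \<gamma> * Lb\<^sup>2 * (1 + R) \<le> m * (1 + R3)\<^sup>2" .
  have "2 * \<gamma> * (Lb / (1 + R3))\<^sup>2 = (2 * \<gamma> * Lb\<^sup>2) / (1 + R3)\<^sup>2"
    by (simp add: power_divide)
  also have "\<dots> \<le> m / (1 + R)"
    by (rule frac_cross) (use A R3p Rp in \<open>auto simp: algebra_simps\<close>)
  finally show "2 * \<gamma> * (Lb / (1 + R3))\<^sup>2 \<le> m / (1 + R)" .
  have "(Lb / (1 + R3))\<^sup>2 / (3 * (m / (1 + R))) = (Lb\<^sup>2 * (1 + R)) / (3 * m * (1 + R3)\<^sup>2)"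
    using R3p Rp m by (simp add: power_divide)
  also have "\<dots> \<le> 128 * Lb^4 / m^3"
  proof (rule frac_cross)
    show "0 < 3 * m * (1 + R3)\<^sup>2" using m R3p by simp
    show "0 < m^3" using m by simp
    have "Lb\<^sup>2 * (1 + R) * m ^ 3 = (Lb\<^sup>2 * m) * (m\<^sup>2 * (1 + R))"
      by (simp add: power2_eq_square power3_eq_cube)
    also have "\<dots> \<le> (Lb\<^sup>2 * m) * (8 * Lb\<^sup>2 * (1 + R3)\<^sup>2)"
      using kR m by (intro mult_left_mono) auto
    also have "\<dots> = 8 * Lb^4 * m * (1 + R3)\<^sup>2"
      by (simp add: power2_eq_square power4_eq_xxxx)
    also have "\<dots> \<le> 128 * Lb ^ 4 * (3 * m * (1 + R3)\<^sup>2)"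
      using m Lb by (simp add: mult_right_mono)
    finally show "Lb\<^sup>2 * (1 + R) * m ^ 3 \<le> 128 * Lb ^ 4 * (3 * m * (1 + R3)\<^sup>2)" .
  qed
  finally show "(Lb / (1 + R3))\<^sup>2 / (3 * (m / (1 + R))) \<le> 128 * Lb^4 / m^3" .
qed




lemma tau_alg:
  fixes gx gy z :: "'a::real_inner" and \<gamma> :: real
  assumes g: "\<gamma> \<ge> 0"
  shows "(1/2) * ((norm (z - sqrt (\<gamma> / 2) *\<^sub>R (gx + gy)))\<^sup>2 - (norm z)\<^sup>2)
     = - inner gy (sqrt (2 * \<gamma>) *\<^sub>R z - \<gamma> *\<^sub>R gx) + (sqrt (2 * \<gamma>) / 2) * inner (gy - gx) z
       + (\<gamma> / 4) * (norm (gy - gx))\<^sup>2"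
proof -
  define c where "c = sqrt (\<gamma> / 2)"
  have s: "sqrt (2 * \<gamma>) = 2 * c"
  proof -
    have "sqrt (2 * \<gamma>) = sqrt (4 * (\<gamma> / 2))" by simp
    also have "\<dots> = sqrt 4 * sqrt (\<gamma> / 2)" by (rule real_sqrt_mult)
    also have "\<dots> = 2 * c" unfolding c_def by simp
    finally show ?thesis .
  qed
  have c2: "c * c = \<gamma> / 2" unfolding c_def using g by simp
  have g2: "\<gamma> = 2 * (c * c)" using c2 by simp
  show ?thesis
    unfolding s c_def[symmetric] power2_norm_eq_inner
    apply (simp add: inner_diff_left inner_diff_right inner_add_left inner_add_right inner_commute)
    apply (simp add: g2 algebra_simps)
    apply (simp add: field_simps)
    done
qed

lemma strong_conv:
  fixes f f1 f2 :: "real \<Rightarrow> real"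
  assumes d1: "\<And>t. (f has_real_derivative f1 t) (at t)"
    and d2: "\<And>t. (f1 has_real_derivative f2 t) (at t)"
    and k: "\<And>t. 0 \<le> t \<Longrightarrow> t \<le> 1 \<Longrightarrow> f2 t \<ge> \<kappa>"
  shows "f 1 - f 0 - f1 1 \<le> - \<kappa> / 2"
proof -
  define \<phi> where "\<phi> t = f1 t - \<kappa> * t" for t
  have dphi: "(\<phi> has_real_derivative (f2 t - \<kappa>)) (at t)" for t
    unfolding \<phi>_def by (auto intro!: derivative_eq_intros d2)
  have mono: "\<phi> t \<le> \<phi> 1" if "0 \<le> t" "t \<le> 1" for t
  proof (cases "t = 1")
    case True then show ?thesis by simp
  next
    case False
    then have "t < 1" using that by simp
    from MVT2[OF this, of \<phi> "\<lambda>t. f2 t - \<kappa>"] dphi obtain \<xi> where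
      xi: "t < \<xi>" "\<xi> < 1" "\<phi> 1 - \<phi> t = (1 - t) * (f2 \<xi> - \<kappa>)" by blast
    have "f2 \<xi> - \<kappa> \<ge> 0" using k[of \<xi>] xi that by simp
    then have "(1 - t) * (f2 \<xi> - \<kappa>) \<ge> 0" using xi by simp
    then show ?thesis using xi by simp
  qed
  define \<psi> where "\<psi> t = f t - f1 1 * t - \<kappa> * (t - 1)\<^sup>2 / 2" for t
  have dpsi: "(\<psi> has_real_derivative (\<phi> t - \<phi> 1)) (at t)" for t
    unfolding \<psi>_def \<phi>_def by (auto intro!: derivative_eq_intros d1 simp: power2_eq_square field_simps)
  from MVT2[of 0 1 \<psi> "\<lambda>t. \<phi> t - \<phi> 1"] dpsi obtain \<xi> where
    xi: "0 < \<xi>" "\<xi> < 1" "\<psi> 1 - \<psi> 0 = (1 - 0) * (\<phi> \<xi> - \<phi> 1)" by auto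
  have "\<psi> 1 - \<psi> 0 \<le> 0" using xi mono[of \<xi>] by simp
  then show ?thesis unfolding \<psi>_def by simp
qed

lemma mvt_abs_bound:
  fixes j j' :: "real \<Rightarrow> real"
  assumes d: "\<And>t. (j has_real_derivative j' t) (at t)"
    and b: "\<And>t. 0 \<le> t \<Longrightarrow> t \<le> 1 \<Longrightarrow> \<bar>j' t\<bar> \<le> B"
  shows "\<bar>j 1 - j 0\<bar> \<le> B"
proof -
  from MVT2[of 0 1 j j'] d obtain \<xi> where xi: "0 < \<xi>" "\<xi> < 1" "j 1 - j 0 = (1 - 0) * j' \<xi>" by auto
  then show ?thesis using b[of \<xi>] by simp
qed



lemma quad_from_curv:
  fixes A :: "'a::real_inner \<Rightarrow>\<^sub>L 'a" and lo_c up_c :: real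
  assumes c: "\<And>y. norm y = 1 \<Longrightarrow> up_c \<ge> inner (A y) y \<and> inner (A y) y \<ge> lo_c"
  shows "lo_c * (norm v)\<^sup>2 \<le> inner (A v) v" "inner (A v) v \<le> up_c * (norm v)\<^sup>2"
proof -
  have "lo_c * (norm v)\<^sup>2 \<le> inner (A v) v \<and> inner (A v) v \<le> up_c * (norm v)\<^sup>2"
  proof (cases "v = 0")
    case True then show ?thesis by (simp add: blinfun.zero_right)
  next
    case False
    then have nv: "norm v > 0" by simp
    define v' where "v' = (1 / norm v) *\<^sub>R v"
    have n1: "norm v' = 1" unfolding v'_def using nv by simp
    have vv: "v = norm v *\<^sub>R v'" unfolding v'_def using nv by simp
    have e: "inner (A v) v = (norm v)\<^sup>2 * inner (A v') v'"
      by (subst (1 2) vv) (simp add: blinfun.scaleR_right power2_eq_square)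
    have n2: "(norm v)\<^sup>2 \<ge> 0" by simp
    from c[OF n1] have "lo_c \<le> inner (A v') v'" "inner (A v') v' \<le> up_c" by auto
    then have "(norm v)\<^sup>2 * lo_c \<le> (norm v)\<^sup>2 * inner (A v') v'"
        "(norm v)\<^sup>2 * inner (A v') v' \<le> (norm v)\<^sup>2 * up_c"
      using n2 by (auto intro: mult_left_mono)
    then show ?thesis unfolding e by (simp add: mult.commute)
  qed
  then show "lo_c * (norm v)\<^sup>2 \<le> inner (A v) v" "inner (A v) v \<le> up_c * (norm v)\<^sup>2" by auto
qed

lemma C2_lower:
  fixes L m Lb gb :: real
  assumes m: "m > 0" and Lb: "Lb > 0" and L: "L \<ge> 0" and gb: "gb \<ge> 0"
  shows "128 * Lb^4 / m^3 \<le> C2_const L m Lb gb"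
proof -
  define D where "D = 2 powr (3/2) * Lb\<^sup>2 + 2 powr (-1/2) * sqrt gb * Lb ^ 3"
  define \<epsilon> where "\<epsilon> = eps_const m Lb gb"
  have D1: "D \<ge> 2 powr (3/2) * Lb\<^sup>2" unfolding D_def using Lb gb by simp
  have Dp: "D > 0" using D1 Lb by (smt (verit) powr_gt_zero zero_less_power mult_pos_pos)
  have eps: "\<epsilon> = (m^3 / 16) / D" unfolding \<epsilon>_def eps_const_def D_def by simp
  have ep: "\<epsilon> > 0" unfolding eps using m Dp by simp
  have mid: "2 powr (3/2) * Lb\<^sup>2 / \<epsilon> = 16 * (2 powr (3/2) * Lb\<^sup>2) * D / m^3"
    unfolding eps using m Dp by (simp add: field_simps)
  have "16 * (2 powr (3/2) * Lb\<^sup>2) * (2 powr (3/2) * Lb\<^sup>2) \<le> 16 * (2 powr (3/2) * Lb\<^sup>2) * D"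
    using D1 Lb by (intro mult_left_mono) auto
  moreover have "16 * (2 powr (3/2) * Lb\<^sup>2) * (2 powr (3/2) * Lb\<^sup>2) = 128 * Lb^4"
  proof -
    have "2 powr (3/2) * 2 powr (3/2) = (2::real) powr 3" by (simp flip: powr_add)
    also have "\<dots> = 8" by simp
    finally have "2 powr (3/2) * 2 powr (3/2) = (8::real)" .
    then show ?thesis by (simp add: power2_eq_square power4_eq_xxxx algebra_simps)
  qed
  ultimately have "128 * Lb^4 / m^3 \<le> 16 * (2 powr (3/2) * Lb\<^sup>2) * D / m^3"
    using m by (intro divide_right_mono) auto
  also have "\<dots> = 2 powr (3/2) * Lb\<^sup>2 / \<epsilon>" using mid by simp
  also have "\<dots> \<le> C2_const L m Lb gb"
  proof -
    have t1: "0 \<le> 2 * L" using L by simp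
    have t3: "0 \<le> (gb / 2) * L\<^sup>2" using gb by simp
    have t4: "0 \<le> 2 powr (-1/2) * gb powr (3/2) * Lb ^ 3 / \<epsilon>" using ep Lb by simp
    show ?thesis unfolding C2_const_def Let_def \<epsilon>_def[symmetric] using t1 t3 t4 by linarith
  qed
  finally show ?thesis .
qed



theorem lemma6:
  fixes U :: "'a::euclidean_space \<Rightarrow> real"
    and G :: "'a \<Rightarrow> 'a"
    and H :: "'a \<Rightarrow> 'a \<Rightarrow>\<^sub>L 'a"
    and \<beta> L m\<^sub>\<beta> L\<^sub>\<beta> K\<^sub>\<beta> \<gamma>bar :: real
  assumes beta: "0 \<le> \<beta>" "\<beta> < 1"
    and grad: "\<And>x. (U has_derivative (\<lambda>h. G x \<bullet> h)) (at x)"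
    and hess: "\<And>x. (G has_derivative blinfun_apply (H x)) (at x)"
    and hess_cont: "continuous_on UNIV H"
    and grad0: "G 0 = 0"
    and hess_bound: "\<And>x. norm (H x) \<le> L"
    and m_pos: "m\<^sub>\<beta> > 0" and Lb_nonneg: "L\<^sub>\<beta> \<ge> 0" and Kb_nonneg: "K\<^sub>\<beta> \<ge> 0"
    and curv: "\<And>x y. norm x \<ge> K\<^sub>\<beta> \<Longrightarrow> norm y = 1 \<Longrightarrow>
         L\<^sub>\<beta> / (1 + rpow (norm x) (3 * \<beta> / 4)) \<ge> H x y \<bullet> y \<and>
         H x y \<bullet> y \<ge> m\<^sub>\<beta> / (1 + rpow (norm x) \<beta>)"
    and gbar: "\<gamma>bar \<le> min (1 / (4 * L)) (m\<^sub>\<beta> ^ 3 / (2 ^ 4 * L\<^sub>\<beta> ^ 4))"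
  shows "\<forall>\<gamma> x z. 0 < \<gamma> \<and> \<gamma> \<le> \<gamma>bar \<and>
      norm x \<ge> Max {2 * K\<^sub>\<beta>,
                     max (4 * K\<^sub>\<beta> * (1 + L / m\<^sub>\<beta>)) (rpow (4 * K\<^sub>\<beta> * (1 + L / m\<^sub>\<beta>)) (1 / (1 - \<beta>))),
                     max (2 * L * K\<^sub>\<beta> / L\<^sub>\<beta>) (rpow (2 * L * K\<^sub>\<beta> / L\<^sub>\<beta>) (1 / (1 - 3 * \<beta> / 4)))} \<and>
      norm z \<le> norm x / (4 * sqrt (2 * \<gamma>))
      \<longrightarrow> tau U G \<gamma> x z \<le> C2_const L m\<^sub>\<beta> L\<^sub>\<beta> \<gamma>bar * \<gamma> * (norm z)\<^sup>2"
proof (intro allI impI)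
  fix \<gamma> :: real and x z :: 'a
  assume asm: "0 < \<gamma> \<and> \<gamma> \<le> \<gamma>bar \<and>
      norm x \<ge> Max {2 * K\<^sub>\<beta>,
                     max (4 * K\<^sub>\<beta> * (1 + L / m\<^sub>\<beta>)) (rpow (4 * K\<^sub>\<beta> * (1 + L / m\<^sub>\<beta>)) (1 / (1 - \<beta>))),
                     max (2 * L * K\<^sub>\<beta> / L\<^sub>\<beta>) (rpow (2 * L * K\<^sub>\<beta> / L\<^sub>\<beta>) (1 / (1 - 3 * \<beta> / 4)))} \<and>
      norm z \<le> norm x / (4 * sqrt (2 * \<gamma>))"
  then have g0: "0 < \<gamma>" and ggb: "\<gamma> \<le> \<gamma>bar" and zb: "norm z \<le> norm x / (4 * sqrt (2 * \<gamma>))"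
    by auto
  from asm have r2K: "2 * K\<^sub>\<beta> \<le> norm x" by simp
  define r where "r = norm x"
  define \<rho> where "\<rho> = r / 2"
  have \<rho>K: "K\<^sub>\<beta> \<le> \<rho>" using r2K unfolding \<rho>_def r_def by simp
  have \<rho>0: "0 \<le> \<rho>" using \<rho>K Kb_nonneg by simp
  have Lpos: "L > 0"
  proof (rule ccontr)
    assume "\<not> L > 0"
    then have "1 / (4 * L) \<le> 0" by (simp add: divide_nonpos_nonneg)
    moreover have "\<gamma>bar \<le> 1 / (4 * L)" using gbar by simp
    ultimately show False using ggb g0 by linarith
  qed
  have gL: "\<gamma> * L \<le> 1/4"
  proof -
    have "\<gamma> \<le> 1 / (4 * L)" using gbar ggb by simp
    then have "\<gamma> * L \<le> 1 / (4 * L) * L" using Lpos by (intro mult_right_mono) auto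
    then show ?thesis using Lpos by simp
  qed
  have gm: "\<gamma> \<le> m\<^sub>\<beta> ^ 3 / (16 * L\<^sub>\<beta> ^ 4)" using gbar ggb by simp
  define e :: 'a where "e = (SOME i. i \<in> Basis)"
  have ne: "norm e = 1" unfolding e_def by (simp add: SOME_Basis)
  have Lbpos: "L\<^sub>\<beta> > 0"
  proof -
    have "norm x \<ge> K\<^sub>\<beta>" using r2K Kb_nonneg by simp
    from curv[OF this ne] have "L\<^sub>\<beta> / (1 + rpow (norm x) (3 * \<beta> / 4)) \<ge> m\<^sub>\<beta> / (1 + rpow (norm x) \<beta>)"
      by linarith
    moreover have "m\<^sub>\<beta> / (1 + rpow (norm x) \<beta>) > 0" using m_pos rpow_nonneg[of "norm x" \<beta>]
      by (simp add: add_pos_nonneg)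
    ultimately have "L\<^sub>\<beta> / (1 + rpow (norm x) (3 * \<beta> / 4)) > 0" by linarith
    moreover have "1 + rpow (norm x) (3 * \<beta> / 4) > 0" using rpow_nonneg[of "norm x"] by (simp add: add_pos_nonneg)
    ultimately show ?thesis by (simp add: zero_less_divide_iff)
  qed
  have Gx: "norm (G x) \<le> L * r"
  proof -
    have "norm (G x - G 0) \<le> L * norm (x - 0)"
    proof (rule differentiable_bound[of UNIV])
      show "convex (UNIV :: 'a set)" by simp
      show "\<And>p. p \<in> UNIV \<Longrightarrow> (G has_derivative blinfun_apply (H p)) (at p within UNIV)"
        using hess by simp
      show "\<And>p. p \<in> UNIV \<Longrightarrow> onorm (blinfun_apply (H p)) \<le> L"
        using hess_bound by (simp add: norm_blinfun.rep_eq[symmetric])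
    qed auto
    then show ?thesis using grad0 unfolding r_def by simp
  qed
  define s where "s = sqrt (2 * \<gamma>)"
  have s0: "s > 0" unfolding s_def using g0 by simp
  define y where "y = x - \<gamma> *\<^sub>R G x + s *\<^sub>R z"
  define \<delta> where "\<delta> = s *\<^sub>R z - \<gamma> *\<^sub>R G x"
  have y\<delta>: "y = x + \<delta>" unfolding y_def \<delta>_def by (simp add: algebra_simps)
  have sz: "s * norm z \<le> r / 4"
  proof -
    have "s * norm z \<le> s * (r / (4 * s))" using zb s0 unfolding s_def[symmetric] r_def
      by (intro mult_left_mono) auto
    then show ?thesis using s0 by simp
  qed
  have gG: "\<gamma> * norm (G x) \<le> r / 4"
  proof -
    have "\<gamma> * norm (G x) \<le> \<gamma> * (L * r)" using Gx g0 by (intro mult_left_mono) auto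
    also have "\<dots> = (\<gamma> * L) * r" by simp
    also have "\<dots> \<le> (1/4) * r" using gL unfolding r_def by (intro mult_right_mono) auto
    finally show ?thesis by simp
  qed
  have nd: "norm \<delta> \<le> r / 2"
  proof -
    have "norm \<delta> \<le> norm (s *\<^sub>R z) + norm (\<gamma> *\<^sub>R G x)" unfolding \<delta>_def by (rule norm_triangle_ineq4)
    also have "\<dots> = s * norm z + \<gamma> * norm (G x)" using s0 g0 by simp
    finally show ?thesis using sz gG by simp
  qed
  have seg: "\<rho> \<le> norm (x + t *\<^sub>R \<delta>) \<and> norm (x + t *\<^sub>R \<delta>) \<le> 3 * \<rho>" if "0 \<le> t" "t \<le> 1" for t
  proof -
    have td: "norm (t *\<^sub>R \<delta>) \<le> r / 2"
    proof -
      have "norm (t *\<^sub>R \<delta>) = t * norm \<delta>" using that by simp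
      also have "\<dots> \<le> 1 * norm \<delta>" using that by (intro mult_right_mono) auto
      finally show ?thesis using nd by simp
    qed
    have "norm x - norm (t *\<^sub>R \<delta>) \<le> norm (x + t *\<^sub>R \<delta>)"
      using norm_triangle_ineq2[of x "- (t *\<^sub>R \<delta>)"] by simp
    moreover have "norm (x + t *\<^sub>R \<delta>) \<le> norm x + norm (t *\<^sub>R \<delta>)" by (rule norm_triangle_ineq)
    ultimately show ?thesis using td unfolding \<rho>_def r_def by auto
  qed
  define a where "a = m\<^sub>\<beta> / (1 + rpow (3 * \<rho>) \<beta>)"
  define b where "b = L\<^sub>\<beta> / (1 + rpow \<rho> (3 * \<beta> / 4))"
  have a0: "a > 0" unfolding a_def using m_pos rpow_nonneg[of "3*\<rho>" \<beta>] by (simp add: add_pos_nonneg)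
  have b0: "b \<ge> 0" unfolding b_def using Lb_nonneg rpow_nonneg[of \<rho>] by (simp add: add_pos_nonneg)
  have qb: "a * (norm v)\<^sup>2 \<le> inner (H p v) v \<and> inner (H p v) v \<le> b * (norm v)\<^sup>2"
    if "\<rho> \<le> norm p" "norm p \<le> 3 * \<rho>" for p v
  proof -
    have pK: "K\<^sub>\<beta> \<le> norm p" using that \<rho>K by simp
    have q1: "m\<^sub>\<beta> / (1 + rpow (norm p) \<beta>) * (norm v)\<^sup>2 \<le> inner (H p v) v"
      and q2: "inner (H p v) v \<le> L\<^sub>\<beta> / (1 + rpow (norm p) (3 * \<beta> / 4)) * (norm v)\<^sup>2"
      using quad_from_curv[of "H p", OF curv[OF pK]] by auto
    have "a \<le> m\<^sub>\<beta> / (1 + rpow (norm p) \<beta>)"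
      unfolding a_def using m_pos rpow_nonneg[of "norm p" \<beta>] rpow_mono[of "norm p" "3 * \<rho>" \<beta>] that beta
      by (intro divide_left_mono) (auto simp: add_pos_nonneg)
    then have "a * (norm v)\<^sup>2 \<le> m\<^sub>\<beta> / (1 + rpow (norm p) \<beta>) * (norm v)\<^sup>2"
      by (intro mult_right_mono) auto
    moreover have "L\<^sub>\<beta> / (1 + rpow (norm p) (3 * \<beta> / 4)) \<le> b"
      unfolding b_def using Lb_nonneg rpow_nonneg[of \<rho> "3 * \<beta> / 4"] rpow_mono[of \<rho> "norm p" "3 * \<beta> / 4"] that beta \<rho>0
      by (intro divide_left_mono) (auto simp: add_pos_nonneg)
    then have "L\<^sub>\<beta> / (1 + rpow (norm p) (3 * \<beta> / 4)) * (norm v)\<^sup>2 \<le> b * (norm v)\<^sup>2"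
      by (intro mult_right_mono) auto
    ultimately show ?thesis using q1 q2 by linarith
  qed
  have bil: "\<bar>inner (H p v) w\<bar> \<le> b * norm v * norm w"
    if "\<rho> \<le> norm p" "norm p \<le> 3 * \<rho>" for p v w
  proof (rule psd_bound)
    show "\<And>u v. inner (H p v) u = inner (H p u) v" using hess_sym[OF grad hess hess_cont] .
    show "\<And>v. 0 \<le> inner (H p v) v"
    proof -
      fix v
      have "a * (norm v)\<^sup>2 \<le> inner (H p v) v" using qb[OF that] by blast
      moreover have "0 \<le> a * (norm v)\<^sup>2" using a0 by simp
      ultimately show "0 \<le> inner (H p v) v" by linarith
    qed
    show "\<And>v. inner (H p v) v \<le> b * (norm v)\<^sup>2" using qb[OF that] by blast
  qed
  have SC: "U y - U x - inner (G y) \<delta> \<le> - (a * (norm \<delta>)\<^sup>2) / 2"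
  proof -
    have "(\<lambda>t. U (x + t *\<^sub>R \<delta>)) 1 - (\<lambda>t. U (x + t *\<^sub>R \<delta>)) 0 - (\<lambda>t. inner (G (x + t *\<^sub>R \<delta>)) \<delta>) 1
        \<le> - (a * (norm \<delta>)\<^sup>2) / 2"
    proof (rule strong_conv)
      show "\<And>t. ((\<lambda>t. U (x + t *\<^sub>R \<delta>)) has_real_derivative inner (G (x + t *\<^sub>R \<delta>)) \<delta>) (at t)"
        by (rule line_deriv_real[OF grad])
      show "\<And>t. ((\<lambda>t. inner (G (x + t *\<^sub>R \<delta>)) \<delta>) has_real_derivative inner (H (x + t *\<^sub>R \<delta>) \<delta>) \<delta>) (at t)"
        by (rule line_deriv_vec[OF hess])
      show "\<And>t. 0 \<le> t \<Longrightarrow> t \<le> 1 \<Longrightarrow> a * (norm \<delta>)\<^sup>2 \<le> inner (H (x + t *\<^sub>R \<delta>) \<delta>) \<delta>"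
        using qb seg by blast
    qed
    then show ?thesis unfolding y\<delta> by simp
  qed
  define \<Delta> where "\<Delta> = G y - G x"
  have Dw: "\<bar>inner \<Delta> w\<bar> \<le> b * norm \<delta> * norm w" for w
  proof -
    have "\<bar>(\<lambda>t. inner (G (x + t *\<^sub>R \<delta>)) w) 1 - (\<lambda>t. inner (G (x + t *\<^sub>R \<delta>)) w) 0\<bar> \<le> b * norm \<delta> * norm w"
    proof (rule mvt_abs_bound)
      show "\<And>t. ((\<lambda>t. inner (G (x + t *\<^sub>R \<delta>)) w) has_real_derivative inner (H (x + t *\<^sub>R \<delta>) \<delta>) w) (at t)"
        by (rule line_deriv_vec[OF hess])
      show "\<And>t. 0 \<le> t \<Longrightarrow> t \<le> 1 \<Longrightarrow> \<bar>inner (H (x + t *\<^sub>R \<delta>) \<delta>) w\<bar> \<le> b * norm \<delta> * norm w"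
        using bil seg by blast
    qed
    then show ?thesis unfolding \<Delta>_def y\<delta> by (simp add: inner_diff_left)
  qed
  have nD: "norm \<Delta> \<le> b * norm \<delta>"
  proof (cases "\<Delta> = 0")
    case True then show ?thesis using b0 by simp
  next
    case False
    have "norm \<Delta> * norm \<Delta> \<le> (b * norm \<delta>) * norm \<Delta>"
      using Dw[of \<Delta>] by (simp add: power2_norm_eq_inner[symmetric] power2_eq_square)
    then show ?thesis using False by simp
  qed
  have tauid: "tau U G \<gamma> x z = (U y - U x - inner (G y) \<delta>) + (s / 2) * inner \<Delta> z + (\<gamma> / 4) * (norm \<Delta>)\<^sup>2"
  proof -
    have "tau U G \<gamma> x z = U y - U x + (1/2) * ((norm (z - sqrt (\<gamma> / 2) *\<^sub>R (G x + G y)))\<^sup>2 - (norm z)\<^sup>2)"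
      unfolding tau_def y_def s_def Let_def by simp
    also have "\<dots> = U y - U x + (- inner (G y) (s *\<^sub>R z - \<gamma> *\<^sub>R G x) + (s / 2) * inner (G y - G x) z
       + (\<gamma> / 4) * (norm (G y - G x))\<^sup>2)"
      unfolding s_def using tau_alg[of \<gamma> z "G x" "G y"] g0 by simp
    finally show ?thesis unfolding \<Delta>_def \<delta>_def by simp
  qed
  define d where "d = norm \<delta>"
  have step1: "tau U G \<gamma> x z \<le> - (a/2 - \<gamma> * b\<^sup>2 / 4) * d\<^sup>2 + ((s / 2) * b * norm z) * d"
  proof -
    have "(s / 2) * inner \<Delta> z \<le> (s / 2) * (b * d * norm z)"
      using Dw[of z] s0 unfolding d_def by (intro mult_left_mono) auto
    moreover have "(\<gamma> / 4) * (norm \<Delta>)\<^sup>2 \<le> (\<gamma> / 4) * (b * d)\<^sup>2"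
      using nD g0 unfolding d_def by (intro mult_left_mono power_mono) auto
    ultimately show ?thesis using tauid SC unfolding d_def
      by (simp add: power_mult_distrib algebra_simps)
  qed
  have Rpieces: "rpow \<rho> \<beta> = (rpow \<rho> (\<beta>/4))^4" "rpow \<rho> (3*\<beta>/4) = (rpow \<rho> (\<beta>/4))^3"
    "rpow (3*\<rho>) \<beta> \<le> 3 * rpow \<rho> \<beta>"
    using rpow_pieces[OF \<rho>0 beta(1) less_imp_le[OF beta(2)]] by blast+
  have rel: "m\<^sub>\<beta> * (1 + rpow \<rho> (3*\<beta>/4)) \<le> L\<^sub>\<beta> * (1 + rpow \<rho> \<beta>)"
  proof -
    have nh: "norm ((1/2) *\<^sub>R x) = \<rho>" unfolding \<rho>_def r_def by simp
    have "K\<^sub>\<beta> \<le> norm ((1/2) *\<^sub>R x)" using nh \<rho>K by simp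
    from curv[OF this ne] nh have "m\<^sub>\<beta> / (1 + rpow \<rho> \<beta>) \<le> L\<^sub>\<beta> / (1 + rpow \<rho> (3 * \<beta> / 4))"
      by (metis (no_types, lifting) order_trans)
    moreover have "1 + rpow \<rho> \<beta> > 0" "1 + rpow \<rho> (3 * \<beta> / 4) > 0"
      using rpow_nonneg[of \<rho>] by (auto simp: add_pos_nonneg)
    ultimately show ?thesis by (simp add: divide_simps mult.commute)
  qed
  note FA0 = final_alg[OF m_pos Lbpos rpow_nonneg[of \<rho> "\<beta>/4"] Rpieces(1) Rpieces(2) rpow_nonneg Rpieces(3)
        rel g0 gm]
  have FA: "2 * \<gamma> * b\<^sup>2 \<le> a" "b\<^sup>2 / (3 * a) \<le> 128 * L\<^sub>\<beta>^4 / m\<^sub>\<beta>^3"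
    unfolding a_def b_def by (rule FA0(1), rule FA0(2))
  define \<alpha> where "\<alpha> = a/2 - \<gamma> * b\<^sup>2 / 4"
  have \<alpha>0: "\<alpha> > 0" unfolding \<alpha>_def using FA(1) a0 by simp
  have step2: "tau U G \<gamma> x z \<le> ((s / 2) * b * norm z)\<^sup>2 / (4 * \<alpha>)"
    using step1 quad_max[OF \<alpha>0, where c = "(s / 2) * b * norm z" and d = d] unfolding \<alpha>_def by linarith
  have s2: "s\<^sup>2 = 2 * \<gamma>" unfolding s_def using g0 by simp
  have step3: "((s / 2) * b * norm z)\<^sup>2 / (4 * \<alpha>) \<le> \<gamma> * (norm z)\<^sup>2 * (b\<^sup>2 / (3 * a))"
  proof -
    define X where "X = \<gamma> * b\<^sup>2 * (norm z)\<^sup>2"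
    have X0: "X \<ge> 0" unfolding X_def using g0 by simp
    have "((s / 2) * b * norm z)\<^sup>2 / (4 * \<alpha>) = X / (2 * (4 * \<alpha>))"
      unfolding X_def by (simp add: power_mult_distrib s2 field_simps)
    also have "\<dots> \<le> X / (3 * a)"
      using X0 a0 \<alpha>0 FA(1) unfolding \<alpha>_def by (intro divide_left_mono) auto
    also have "\<dots> = \<gamma> * (norm z)\<^sup>2 * (b\<^sup>2 / (3 * a))" unfolding X_def by simp
    finally show ?thesis .
  qed
  have step4: "\<gamma> * (norm z)\<^sup>2 * (b\<^sup>2 / (3 * a)) \<le> \<gamma> * (norm z)\<^sup>2 * C2_const L m\<^sub>\<beta> L\<^sub>\<beta> \<gamma>bar"
  proof -
    have "b\<^sup>2 / (3 * a) \<le> C2_const L m\<^sub>\<beta> L\<^sub>\<beta> \<gamma>bar"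
      using FA(2) C2_lower[OF m_pos Lbpos, of L \<gamma>bar] Lpos g0 ggb by simp
    then show ?thesis using g0 by (intro mult_left_mono) auto
  qed
  show "tau U G \<gamma> x z \<le> C2_const L m\<^sub>\<beta> L\<^sub>\<beta> \<gamma>bar * \<gamma> * (norm z)\<^sup>2"
    using step2 step3 step4 by (simp add: algebra_simps)
qed


end
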